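(* Let $\alpha\ge1$, $\beta\ge0$ and $\varepsilon>0$ be reals, and let $\mathscr{C}$ be a graph class closed under taking the subgraph formed by any union of connected components. Suppose $\mathsf{A}$ is a deterministic LOCAL algorithm with round complexity $r$ which on every $G\in\mathscr{C}$ outputs a dominating set of size at most $\alpha\,\mathrm{MDS}(G)+\beta$. Then there is a deterministic LOCAL algorithm with round complexity $r+O(\beta/\varepsilon)$ which on every $G\in\mathscr{C}$ outputs a dominating set of size at most $(\alpha+\varepsilon)\,\mathrm{MDS}(G)$.
   Context: $\mathrm{MDS}(G)$ is the minimum size of a dominating set of $G$. Deterministic LOCAL model: distinct positive integer identifiers, synchronous rounds of unbounded message exchange with neighbours and unbounded local computation; round complexity $r$ means every vertex fixes its output after $r$ rounds; the output is the set of vertices outputting "selected". *)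

theory Defs
  imports Complex_Main
begin

text \<open>A graph is a pair (V, E): V is a finite set of vertex identifiers (distinct positive
  integers), E a symmetric irreflexive set of ordered pairs of vertices.\<close>

type_synonym graph = "nat set \<times> (nat \<times> nat) set"

definition wf_graph :: "graph \<Rightarrow> bool" where
  "wf_graph G \<longleftrightarrow> finite (fst G) \<and> 0 \<notin> fst G \<and> snd G \<subseteq> fst G \<times> fst G
     \<and> (\<forall>x y. (x, y) \<in> snd G \<longrightarrow> (y, x) \<in> snd G) \<and> (\<forall>x. (x, x) \<notin> snd G)"

definition dominating :: "graph \<Rightarrow> nat set \<Rightarrow> bool" where
  "dominating G D \<longleftrightarrow> D \<subseteq> fst G \<and>
     (\<forall>v\<in>fst G. v \<in> D \<or> (\<exists>u\<in>D. (u, v) \<in> snd G))"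

definition MDS :: "graph \<Rightarrow> nat" where
  "MDS G = (LEAST k. \<exists>D. dominating G D \<and> card D = k)"

definition ball :: "graph \<Rightarrow> nat \<Rightarrow> nat \<Rightarrow> nat set" where
  "ball G k v = {u. v \<in> fst G \<and> (v, u) \<in> (Id_on (fst G) \<union> snd G) ^^ k}"

text \<open>The view of v after r rounds: the identifiers of all vertices within distance r,
  and all edges incident to a vertex at distance less than r.\<close>
definition view_vertices :: "graph \<Rightarrow> nat \<Rightarrow> nat \<Rightarrow> nat set" where
  "view_vertices G r v = ball G r v"

definition view_edges :: "graph \<Rightarrow> nat \<Rightarrow> nat \<Rightarrow> (nat \<times> nat) set" where
  "view_edges G r v = {(x, y) \<in> snd G. \<exists>k. Suc k \<le> r \<and> (x \<in> ball G k v \<or> y \<in> ball G k v)}"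

text \<open>A deterministic LOCAL algorithm with round complexity r is a function of the
  r-round view (own identifier, vertex identifiers seen, edges seen) to the output
  "selected" (True) / "not selected" (False).\<close>
type_synonym local_alg = "nat \<Rightarrow> nat set \<Rightarrow> (nat \<times> nat) set \<Rightarrow> bool"

definition run_local :: "local_alg \<Rightarrow> nat \<Rightarrow> graph \<Rightarrow> nat set" where
  "run_local A r G = {v \<in> fst G. A v (view_vertices G r v) (view_edges G r v)}"

definition induced :: "graph \<Rightarrow> nat set \<Rightarrow> graph" where
  "induced G S = (S, {(x, y) \<in> snd G. x \<in> S \<and> y \<in> S})"

definition union_of_components :: "graph \<Rightarrow> nat set \<Rightarrow> bool" where
  "union_of_components G S \<longleftrightarrow> S \<subseteq> fst G \<and> (\<forall>x y. (x, y) \<in> snd G \<longrightarrow> x \<in> S \<longrightarrow> y \<in> S)"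

definition closed_under_components :: "graph set \<Rightarrow> bool" where
  "closed_under_components \<C> \<longleftrightarrow>
     (\<forall>G\<in>\<C>. \<forall>S. wf_graph G \<longrightarrow> union_of_components G S \<longrightarrow> induced G S \<in> \<C>)"

end

theory Submission
  imports Defs
begin


lemma ball_0: "ball G 0 v = (if v \<in> fst G then {v} else {})"
  by (auto simp: ball_def)

lemma ball_Suc: "ball G (Suc k) v = {u. \<exists>x\<in>ball G k v. (x = u \<and> x \<in> fst G) \<or> (x,u) \<in> snd G}"
  by (auto simp: ball_def elim!: relpow_Suc_E intro: relpow_Suc_I)

lemma ball_sub: "snd G \<subseteq> fst G \<times> fst G \<Longrightarrow> ball G k v \<subseteq> fst G"
  by (induction k) (auto simp: ball_0 ball_Suc)

lemma ball_mono_Suc: "snd G \<subseteq> fst G \<times> fst G \<Longrightarrow> ball G k v \<subseteq> ball G (Suc k) v"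
  using ball_sub[of G k v] by (auto simp: ball_Suc)

lemma ball_mono: assumes "snd G \<subseteq> fst G \<times> fst G" "j \<le> k" shows "ball G j v \<subseteq> ball G k v"
  using assms(2)
proof (induction k rule: dec_induct)
  case base then show ?case by simp
next
  case (step k) then show ?case using ball_mono_Suc[of G k v] assms(1) by blast
qed

lemma v_in_ball: "snd G \<subseteq> fst G \<times> fst G \<Longrightarrow> v \<in> fst G \<Longrightarrow> v \<in> ball G k v"
  using ball_mono[of G 0 k v] by (auto simp: ball_0)

lemma ball_stable: assumes "ball G (Suc k) v = ball G k v" "k \<le> j" shows "ball G j v = ball G k v"
  using assms(2)
proof (induction j rule: dec_induct)
  case base then show ?case by simp
next
  case (step j)
  have "ball G (Suc j) v = ball G (Suc k) v" by (simp only: ball_Suc step.IH)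
  then show ?case using assms(1) by simp
qed

lemma ball_closed_sub:
  assumes "v \<in> S" "\<forall>x y. (x,y) \<in> snd G \<longrightarrow> x \<in> S \<longrightarrow> y \<in> S"
  shows "ball G k v \<subseteq> S"
  using assms by (induction k) (auto simp: ball_0 ball_Suc)

lemma relpow_sym: "(\<forall>a b. (a,b) \<in> R \<longrightarrow> (b,a) \<in> R) \<Longrightarrow> (a,b) \<in> R ^^ k \<Longrightarrow> (b,a) \<in> R ^^ k"
proof (induction k arbitrary: a b)
  case 0 then show ?case by simp
next
  case (Suc k)
  then obtain y where "(a,y) \<in> R ^^ k" "(y,b) \<in> R" by (auto elim: relpow_Suc_E)
  then show ?case using Suc by (blast intro: relpow_Suc_I2)
qed

lemma ball_sym: assumes "wf_graph G" "u \<in> ball G k v" shows "v \<in> ball G k u"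
proof -
  let ?R = "Id_on (fst G) \<union> snd G"
  have s: "\<forall>a b. (a,b) \<in> ?R \<longrightarrow> (b,a) \<in> ?R" using assms(1) by (auto simp: wf_graph_def)
  have "(v,u) \<in> ?R ^^ k" "v \<in> fst G" using assms(2) by (auto simp: ball_def)
  then have "(u,v) \<in> ?R ^^ k" using relpow_sym[OF s] by blast
  moreover have "u \<in> fst G" using assms ball_sub[of G k v] by (auto simp: wf_graph_def)
  ultimately show ?thesis by (auto simp: ball_def)
qed



lemma wfD: assumes "wf_graph G"
  shows "finite (fst G)" "snd G \<subseteq> fst G \<times> fst G" "\<And>x y. (x,y) \<in> snd G \<Longrightarrow> (y,x) \<in> snd G"
  using assms by (auto simp: wf_graph_def)

lemma sphere:
  assumes wf: "wf_graph G" and v: "v \<in> fst G"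
    and ne: "ball G (Suc (3*m)) v \<noteq> ball G (3*m) v"
    and dom: "\<forall>u\<in>ball G (3*m) v. u \<in> D \<or> (\<exists>x\<in>D. (x,u) \<in> snd G)"
    and fin: "finite D"
  shows "m + 1 \<le> card (D \<inter> ball G (Suc (3*m)) v)"
proof -
  have sub: "snd G \<subseteq> fst G \<times> fst G" using wfD[OF wf] by simp
  have ex: "\<exists>x. x \<in> D \<and> x \<in> ball G (Suc (3*t)) v \<and> (0 < t \<longrightarrow> x \<notin> ball G (3*t-2) v)"
    if t: "t \<le> m" for t
  proof -
    have "\<exists>y. y \<in> ball G (3*t) v \<and> (0 < t \<longrightarrow> y \<notin> ball G (3*t-1) v)"
    proof (cases "t = 0")
      case True then show ?thesis using v_in_ball[OF sub v] by auto
    next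
      case False
      have "ball G (3*t) v \<noteq> ball G (3*t-1) v"
      proof
        assume eq: "ball G (3*t) v = ball G (3*t-1) v"
        have s: "ball G (Suc (3*t-1)) v = ball G (3*t-1) v" using eq False
          by (metis Suc_diff_1 bot_nat_0.not_eq_extremum mult_pos_pos zero_less_numeral)
        have "ball G (Suc (3*m)) v = ball G (3*t-1) v" by (rule ball_stable[OF s]) (use t in auto)
        moreover have "ball G (3*m) v = ball G (3*t-1) v" by (rule ball_stable[OF s]) (use t in auto)
        ultimately show False using ne by simp
      qed
      moreover have "ball G (3*t-1) v \<subseteq> ball G (3*t) v" by (rule ball_mono[OF sub]) auto
      ultimately show ?thesis by blast
    qed
    then obtain y where y: "y \<in> ball G (3*t) v" "0 < t \<longrightarrow> y \<notin> ball G (3*t-1) v" by blast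
    have "y \<in> ball G (3*m) v" using y(1) ball_mono[OF sub, of "3*t" "3*m" v] t by auto
    then obtain x where x: "x \<in> D" "x = y \<or> (x,y) \<in> snd G" using dom by blast
    have b1: "x \<in> ball G (Suc (3*t)) v"
      using x(2) y(1) ball_mono_Suc[OF sub, of "3*t" v] wfD(3)[OF wf, of x y]
      by (auto simp: ball_Suc)
    have b2: "x \<notin> ball G (3*t-2) v" if "0 < t"
    proof
      assume xin: "x \<in> ball G (3*t-2) v"
      have "y \<in> ball G (Suc (3*t-2)) v"
        using x(2) xin ball_mono_Suc[OF sub, of "3*t-2" v] by (auto simp: ball_Suc)
      moreover have "Suc (3*t-2) = 3*t-1" using that by simp
      ultimately show False using y(2) that by simp
    qed
    show ?thesis using x(1) b1 b2 by blast
  qed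
  then obtain f where f: "\<And>t. t \<le> m \<Longrightarrow> f t \<in> D \<and> f t \<in> ball G (Suc (3*t)) v \<and> (0 < t \<longrightarrow> f t \<notin> ball G (3*t-2) v)"
    by metis
  have inj: "inj_on f {..m}"
  proof (rule inj_onI)
    have key: "f s \<noteq> f t" if "s < t" "t \<le> m" for s t
    proof -
      have "f s \<in> ball G (Suc (3*s)) v" using f that by simp
      moreover have "ball G (Suc (3*s)) v \<subseteq> ball G (3*t-2) v" by (rule ball_mono[OF sub]) (use that in auto)
      ultimately show ?thesis using f[of t] that by auto
    qed
    fix s t assume "s \<in> {..m}" "t \<in> {..m}" "f s = f t"
    then show "s = t" using key[of s t] key[of t s] by (metis atMost_iff linorder_neqE_nat)
  qed
  have "f ` {..m} \<subseteq> D \<inter> ball G (Suc (3*m)) v"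
  proof
    fix x assume "x \<in> f ` {..m}"
    then obtain t where t: "t \<le> m" "x = f t" by auto
    have "ball G (Suc (3*t)) v \<subseteq> ball G (Suc (3*m)) v" by (rule ball_mono[OF sub]) (use t in auto)
    then show "x \<in> D \<inter> ball G (Suc (3*m)) v" using f[OF t(1)] t by auto
  qed
  then have "card (f ` {..m}) \<le> card (D \<inter> ball G (Suc (3*m)) v)"
    using fin by (intro card_mono) auto
  moreover have "card (f ` {..m}) = m + 1" using card_image[OF inj] by simp
  ultimately show ?thesis by simp
qed

lemma ball_view:
  assumes wf: "wf_graph G" and v: "v \<in> fst G" and k: "k \<le> r'"
  shows "ball (ball G r' v, view_edges G r' v) k v = ball G k v"
  using k
proof (induction k)
  case 0 then show ?case using v_in_ball[OF wfD(2)[OF wf] v] v by (simp add: ball_0)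
next
  case (Suc k)
  have sub: "snd G \<subseteq> fst G \<times> fst G" using wfD[OF wf] by simp
  have IH: "ball (ball G r' v, view_edges G r' v) k v = ball G k v" using Suc by simp
  have A: "ball G k v \<subseteq> ball G r' v" using ball_mono[OF sub, of k r' v] Suc by simp
  have B: "ball G k v \<subseteq> fst G" using ball_sub[OF sub] by blast
  have C: "(x,u) \<in> view_edges G r' v \<longleftrightarrow> (x,u) \<in> snd G" if "x \<in> ball G k v" for x u
    using that Suc(2) by (auto simp: view_edges_def)
  show ?case unfolding ball_Suc[of _ k] IH using A B C by auto
qed

lemma view_edges_view:
  assumes wf: "wf_graph G" and v: "v \<in> fst G" and k: "k \<le> r'"
  shows "view_edges (ball G r' v, view_edges G r' v) k v = view_edges G k v"
proof -
  have "\<And>j. Suc j \<le> k \<Longrightarrow> ball (ball G r' v, view_edges G r' v) j v = ball G j v"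
    using ball_view[OF wf v] k by simp
  then show ?thesis using k unfolding view_edges_def apply auto using le_trans by blast+
qed

lemma induced_view:
  assumes "R < r'"
  shows "induced (ball G r' v, view_edges G r' v) (ball G R v) = induced G (ball G R v)"
  using assms unfolding induced_def view_edges_def by force

lemma ball_induced:
  assumes wf: "wf_graph G" and L: "union_of_components G L" and v: "v \<in> L"
  shows "ball (induced G L) k v = ball G k v"
proof (induction k)
  case 0 then show ?case using v L by (auto simp: ball_0 induced_def union_of_components_def)
next
  case (Suc k)
  have cl: "\<forall>x y. (x,y) \<in> snd G \<longrightarrow> x \<in> L \<longrightarrow> y \<in> L" using L by (auto simp: union_of_components_def)
  have A: "ball G k v \<subseteq> L" by (rule ball_closed_sub[OF v cl])
  have LV: "L \<subseteq> fst G" using L by (auto simp: union_of_components_def)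
  show ?case unfolding ball_Suc[of _ k] Suc using A LV cl by (auto simp: induced_def) blast
qed

lemma view_edges_induced:
  assumes wf: "wf_graph G" and L: "union_of_components G L" and v: "v \<in> L"
  shows "view_edges (induced G L) k v = view_edges G k v"
proof -
  have cl: "\<forall>x y. (x,y) \<in> snd G \<longrightarrow> x \<in> L \<longrightarrow> y \<in> L" using L by (auto simp: union_of_components_def)
  have A: "\<And>j. ball G j v \<subseteq> L" by (rule ball_closed_sub[OF v cl])
  have s: "\<And>x y. (x,y) \<in> snd G \<Longrightarrow> (y,x) \<in> snd G" using wfD[OF wf] by blast
  show ?thesis unfolding view_edges_def ball_induced[OF assms]
    using A cl s by (auto simp: induced_def) blast+
qed

lemma run_induced:
  assumes wf: "wf_graph G" and L: "union_of_components G L"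
  shows "run_local A r (induced G L) = run_local A r G \<inter> L"
  using ball_induced[OF wf L] view_edges_induced[OF wf L] L
  by (auto simp: run_local_def view_vertices_def induced_def union_of_components_def)

lemma wf_induced: "wf_graph G \<Longrightarrow> L \<subseteq> fst G \<Longrightarrow> wf_graph (induced G L)"
  by (auto simp: wf_graph_def induced_def finite_subset)

lemma MDS_le: "dominating G D \<Longrightarrow> MDS G \<le> card D"
  unfolding MDS_def by (rule Least_le) blast

lemma MDS_ex: "\<exists>D. dominating G D \<and> card D = MDS G"
proof -
  have "dominating G (fst G)" by (auto simp: dominating_def)
  then show ?thesis unfolding MDS_def using LeastI_ex[of "\<lambda>k. \<exists>D. dominating G D \<and> card D = k"] by blast
qed

definition MDSset :: "graph \<Rightarrow> nat set" where
  "MDSset H = (SOME D. dominating H D \<and> card D = MDS H)"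

lemma MDSset: "dominating H (MDSset H) \<and> card (MDSset H) = MDS H"
  unfolding MDSset_def using MDS_ex by (rule someI_ex)



definition smallv :: "graph \<Rightarrow> nat \<Rightarrow> nat \<Rightarrow> bool" where
  "smallv G m v \<longleftrightarrow> ball G (Suc (3*m)) v = ball G (3*m) v \<and> MDS (induced G (ball G (3*m) v)) \<le> m"

definition alg :: "local_alg \<Rightarrow> nat \<Rightarrow> nat \<Rightarrow> local_alg" where
  "alg A r m v Vs Es = (if smallv (Vs,Es) m v then v \<in> MDSset (induced (Vs,Es) (ball (Vs,Es) (3*m) v))
     else A v (ball (Vs,Es) r v) (view_edges (Vs,Es) r v))"

lemma run_alg:
  assumes wf: "wf_graph G"
  shows "run_local (alg A r m) (r + 3*m + 1) G = {v \<in> fst G. if smallv G m v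
     then v \<in> MDSset (induced G (ball G (3*m) v)) else A v (ball G r v) (view_edges G r v)}"
proof -
  let ?r' = "r + 3*m + 1"
  have "alg A r m v (ball G ?r' v) (view_edges G ?r' v) = (if smallv G m v
     then v \<in> MDSset (induced G (ball G (3*m) v)) else A v (ball G r v) (view_edges G r v))"
    if v: "v \<in> fst G" for v
  proof -
    have b1: "ball (ball G ?r' v, view_edges G ?r' v) (Suc (3*m)) v = ball G (Suc (3*m)) v"
      by (rule ball_view[OF wf v]) simp
    have b2: "ball (ball G ?r' v, view_edges G ?r' v) (3*m) v = ball G (3*m) v"
      by (rule ball_view[OF wf v]) simp
    have b3: "ball (ball G ?r' v, view_edges G ?r' v) r v = ball G r v"
      by (rule ball_view[OF wf v]) simp
    have e3: "view_edges (ball G ?r' v, view_edges G ?r' v) r v = view_edges G r v"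
      by (rule view_edges_view[OF wf v]) simp
    have i: "induced (ball G ?r' v, view_edges G ?r' v) (ball G (3*m) v) = induced G (ball G (3*m) v)"
      by (rule induced_view) simp
    show ?thesis unfolding alg_def smallv_def b1 b2 b3 e3 i by simp
  qed
  then show ?thesis unfolding run_local_def view_vertices_def by auto
qed

lemma dom_restrict:
  assumes wf: "wf_graph G" and B: "union_of_components G B" and D: "dominating G D"
  shows "dominating (induced G B) (D \<inter> B)"
  using assms wfD(3)[OF wf]
  unfolding dominating_def induced_def union_of_components_def by auto blast

lemma dominating_fin: "wf_graph G \<Longrightarrow> dominating G D \<Longrightarrow> finite D"
  using wfD(1)[of G] finite_subset[of D "fst G"] by (auto simp: dominating_def)

lemma small_comp:
  assumes wf: "wf_graph G" and v: "v \<in> fst G" and sm: "smallv G m v" and u: "u \<in> ball G (3*m) v"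
  shows "ball G (3*m) u = ball G (3*m) v \<and> smallv G m u"
proof -
  have sub: "snd G \<subseteq> fst G \<times> fst G" using wfD[OF wf] by simp
  define K where "K = ball G (3*m) v"
  have KV: "K \<subseteq> fst G" unfolding K_def by (rule ball_sub[OF sub])
  have clK: "\<forall>x y. (x,y) \<in> snd G \<longrightarrow> x \<in> K \<longrightarrow> y \<in> K"
    using sm unfolding smallv_def K_def by (auto simp: ball_Suc)
  have ucK: "union_of_components G K" using KV clK by (auto simp: union_of_components_def)
  define H where "H = induced G K"
  have wfH: "wf_graph H" unfolding H_def by (rule wf_induced[OF wf KV])
  have uK: "u \<in> K" using u K_def by simp
  obtain D where D: "dominating H D" "card D = MDS H" using MDS_ex by blast
  have Dm: "card D \<le> m" using D sm unfolding smallv_def H_def K_def by simp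
  have stH: "ball H (Suc (3*m)) u = ball H (3*m) u"
  proof (rule ccontr)
    assume ne: "ball H (Suc (3*m)) u \<noteq> ball H (3*m) u"
    have uH: "u \<in> fst H" using uK by (simp add: H_def induced_def)
    have dom: "\<forall>w\<in>ball H (3*m) u. w \<in> D \<or> (\<exists>x\<in>D. (x,w) \<in> snd H)"
      using D(1) ball_sub[OF wfD(2)[OF wfH]] unfolding dominating_def by blast
    have "m + 1 \<le> card (D \<inter> ball H (Suc (3*m)) u)"
      by (rule sphere[OF wfH uH ne dom dominating_fin[OF wfH D(1)]])
    moreover have "card (D \<inter> ball H (Suc (3*m)) u) \<le> card D"
      using dominating_fin[OF wfH D(1)] by (intro card_mono) auto
    ultimately show False using Dm by simp
  qed
  have st: "ball G (Suc (3*m)) u = ball G (3*m) u"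
    using stH ball_induced[OF wf ucK uK] unfolding H_def by simp
  define B where "B = ball G (3*m) u"
  have BK: "B \<subseteq> K" unfolding B_def by (rule ball_closed_sub[OF uK clK])
  have vB: "v \<in> B" unfolding B_def using ball_sym[OF wf] u by blast
  have clB: "\<forall>x y. (x,y) \<in> snd G \<longrightarrow> x \<in> B \<longrightarrow> y \<in> B"
    using st unfolding B_def by (auto simp: ball_Suc)
  have KB: "K \<subseteq> B" unfolding K_def by (rule ball_closed_sub[OF vB clB])
  have eq: "B = K" using BK KB by blast
  show ?thesis using eq st sm unfolding B_def K_def smallv_def by simp
qed



lemma main_constr:
  assumes wf: "wf_graph G" and GC: "G \<in> C" and cC: "closed_under_components C"
    and hyp: "\<forall>G\<in>C. wf_graph G \<longrightarrow> dominating G (run_local A r G) \<and>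
          real (card (run_local A r G)) \<le> \<alpha> * real (MDS G) + \<beta>"
    and al: "\<alpha> \<ge> 1" and ep: "\<epsilon> > 0" and be: "\<beta> \<ge> 0" and m: "\<beta> / \<epsilon> \<le> real m"
  shows "dominating G (run_local (alg A r m) (r + 3*m + 1) G) \<and>
     real (card (run_local (alg A r m) (r + 3*m + 1) G)) \<le> (\<alpha> + \<epsilon>) * real (MDS G)"
proof -
  have sub: "snd G \<subseteq> fst G \<times> fst G" using wfD[OF wf] by simp
  have sym: "\<And>x y. (x,y) \<in> snd G \<Longrightarrow> (y,x) \<in> snd G" using wfD[OF wf] by blast
  have finV: "finite (fst G)" using wfD[OF wf] by simp
  define Out where "Out = run_local (alg A r m) (r + 3*m + 1) G"
  define K where "K = (\<lambda>v. ball G (3*m) v)"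
  define M where "M = (\<lambda>v. MDSset (induced G (K v)))"
  define S where "S = {v \<in> fst G. smallv G m v}"
  define L where "L = fst G - S"
  define D0 where "D0 = run_local A r G"
  have Oeq: "Out = {v \<in> fst G. if smallv G m v then v \<in> M v else A v (ball G r v) (view_edges G r v)}"
    unfolding Out_def M_def K_def by (rule run_alg[OF wf])
  have D0eq: "D0 = {v \<in> fst G. A v (ball G r v) (view_edges G r v)}"
    unfolding D0_def run_local_def view_vertices_def by simp
  have OS: "Out \<inter> S = {v \<in> S. v \<in> M v}" unfolding Oeq S_def by auto
  have OL: "Out \<inter> L = D0 \<inter> L" unfolding Oeq D0eq L_def S_def by auto
  have OV: "Out \<subseteq> fst G" unfolding Oeq by auto
  have hG: "dominating G D0" using hyp GC wf unfolding D0_def by blast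
  have Kcomp: "\<And>v u. v \<in> S \<Longrightarrow> u \<in> K v \<Longrightarrow> K u = K v \<and> u \<in> S"
    using small_comp[OF wf] ball_sub[OF sub] unfolding S_def K_def by blast
  have vK: "\<And>v. v \<in> fst G \<Longrightarrow> v \<in> K v" unfolding K_def using v_in_ball[OF sub] by blast
  have KV: "\<And>v. K v \<subseteq> fst G" unfolding K_def using ball_sub[OF sub] by blast
  have ucK: "union_of_components G (K v)" if "v \<in> S" for v
    using that KV[of v] unfolding S_def smallv_def K_def union_of_components_def by (auto simp: ball_Suc)
  have Mdom: "dominating (induced G (K v)) (M v)" for v unfolding M_def using MDSset by blast
  have MK: "M v \<subseteq> K v" for v using Mdom[of v] by (simp add: dominating_def induced_def)
  have clS: "\<forall>x y. (x,y) \<in> snd G \<longrightarrow> x \<in> S \<longrightarrow> y \<in> S"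
  proof (intro allI impI)
    fix x y assume e: "(x,y) \<in> snd G" and x: "x \<in> S"
    have "y \<in> K x" using ucK[OF x] vK[of x] x e unfolding union_of_components_def S_def by blast
    then show "y \<in> S" using Kcomp[OF x] by blast
  qed
  have clL: "\<forall>x y. (x,y) \<in> snd G \<longrightarrow> x \<in> L \<longrightarrow> y \<in> L"
    using clS sym sub unfolding L_def by blast
  have ucL: "union_of_components G L" using clL unfolding union_of_components_def L_def by blast
  have domO: "dominating G Out"
    unfolding dominating_def
  proof (intro conjI ballI)
    show "Out \<subseteq> fst G" by (rule OV)
    fix w assume w: "w \<in> fst G"
    show "w \<in> Out \<or> (\<exists>u\<in>Out. (u, w) \<in> snd G)"
    proof (cases "w \<in> S")
      case True
      have "w \<in> M w \<or> (\<exists>u\<in>M w. (u,w) \<in> snd (induced G (K w)))"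
        using Mdom[of w] vK[OF w] unfolding dominating_def by (simp add: induced_def)
      then show ?thesis
      proof
        assume "w \<in> M w" then show ?thesis using True OS by blast
      next
        assume "\<exists>u\<in>M w. (u,w) \<in> snd (induced G (K w))"
        then obtain u where u: "u \<in> M w" "(u,w) \<in> snd G" by (auto simp: induced_def)
        have "u \<in> K w" using u MK by blast
        then have "K u = K w" "u \<in> S" using Kcomp[OF True] by auto
        then have "u \<in> Out" using u(1) OS unfolding M_def by auto
        then show ?thesis using u by blast
      qed
    next
      case False
      then have wL: "w \<in> L" using w L_def by blast
      have "w \<in> D0 \<or> (\<exists>u\<in>D0. (u,w) \<in> snd G)" using hG w unfolding dominating_def by blast
      then show ?thesis
      proof
        assume "w \<in> D0" then show ?thesis using wL OL by blast
      next
        assume "\<exists>u\<in>D0. (u,w) \<in> snd G"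
        then obtain u where u: "u \<in> D0" "(u,w) \<in> snd G" by blast
        have "u \<in> L" using clL sym[OF u(2)] wL by blast
        then show ?thesis using u OL by blast
      qed
    qed
  qed
  obtain Ds where Ds: "dominating G Ds" "card Ds = MDS G" using MDS_ex by blast
  have finDs: "finite Ds" by (rule dominating_fin[OF wf Ds(1)])
  have DsV: "Ds \<subseteq> fst G" using Ds(1) by (simp add: dominating_def)
  have finO: "finite Out" using OV finV finite_subset by blast
  have cardO: "card Out = card (Out \<inter> S) + card (Out \<inter> L)"
  proof -
    have "Out = (Out \<inter> S) \<union> (Out \<inter> L)" using OV unfolding L_def by blast
    then have "card Out = card ((Out \<inter> S) \<union> (Out \<inter> L))" by simp
    also have "\<dots> = card (Out \<inter> S) + card (Out \<inter> L)"
      using finO unfolding L_def by (intro card_Un_disjoint) auto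
    finally show ?thesis .
  qed
  have cardDs: "card Ds = card (Ds \<inter> S) + card (Ds \<inter> L)"
  proof -
    have "Ds = (Ds \<inter> S) \<union> (Ds \<inter> L)" using DsV unfolding L_def by blast
    then have "card Ds = card ((Ds \<inter> S) \<union> (Ds \<inter> L))" by simp
    also have "\<dots> = card (Ds \<inter> S) + card (Ds \<inter> L)"
      using finDs unfolding L_def by (intro card_Un_disjoint) auto
    finally show ?thesis .
  qed
  have cS: "card (Out \<inter> S) \<le> card (Ds \<inter> S)"
  proof -
    define KK where "KK = K ` S"
    have finKK: "finite KK" unfolding KK_def S_def using finV by simp
    have KKS: "\<And>B. B \<in> KK \<Longrightarrow> \<exists>v\<in>S. B = K v" unfolding KK_def by blast
    define MM where "MM = (\<lambda>B. MDSset (induced G B))"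
    have "Out \<inter> S \<subseteq> (\<Union>B\<in>KK. MM B)" unfolding OS KK_def MM_def M_def by blast
    moreover have finMM: "finite (MM B)" if BK: "B \<in> KK" for B
    proof -
      obtain v where "v \<in> S" "B = K v" using KKS[OF BK] by blast
      then show ?thesis using MK[of v] KV[of v] finV finite_subset unfolding MM_def M_def by metis
    qed
    ultimately have "card (Out \<inter> S) \<le> card (\<Union>B\<in>KK. MM B)"
      using finKK by (intro card_mono) auto
    also have "\<dots> \<le> (\<Sum>B\<in>KK. card (MM B))" by (rule card_UN_le[OF finKK])
    also have "\<dots> \<le> (\<Sum>B\<in>KK. card (Ds \<inter> B))"
    proof (rule sum_mono)
      fix B assume "B \<in> KK"
      then obtain v where v: "v \<in> S" "B = K v" using KKS by blast
      have "card (MM B) = MDS (induced G B)" unfolding MM_def using MDSset by blast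
      also have "\<dots> \<le> card (Ds \<inter> B)"
        using MDS_le dom_restrict[OF wf ucK[OF v(1)] Ds(1)] v(2) by simp
      finally show "card (MM B) \<le> card (Ds \<inter> B)" .
    qed
    also have "\<dots> = card (\<Union>B\<in>KK. Ds \<inter> B)"
    proof (rule card_UN_disjoint[symmetric, OF finKK])
      show "\<forall>B\<in>KK. finite (Ds \<inter> B)" using finDs by blast
      show "\<forall>B1\<in>KK. \<forall>B2\<in>KK. B1 \<noteq> B2 \<longrightarrow> (Ds \<inter> B1) \<inter> (Ds \<inter> B2) = {}"
      proof (intro ballI impI)
        fix B1 B2 assume b: "B1 \<in> KK" "B2 \<in> KK" "B1 \<noteq> B2"
        obtain v1 where v1: "v1 \<in> S" "B1 = K v1" using KKS b(1) by blast
        obtain v2 where v2: "v2 \<in> S" "B2 = K v2" using KKS b(2) by blast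
        show "(Ds \<inter> B1) \<inter> (Ds \<inter> B2) = {}"
        proof (rule ccontr)
          assume "(Ds \<inter> B1) \<inter> (Ds \<inter> B2) \<noteq> {}"
          then obtain w where "w \<in> K v1" "w \<in> K v2" using v1 v2 by blast
          then have "K w = K v1" "K w = K v2" using Kcomp v1 v2 by blast+
          then show False using b(3) v1 v2 by simp
        qed
      qed
    qed
    also have "\<dots> \<le> card (Ds \<inter> S)"
    proof (rule card_mono)
      show "finite (Ds \<inter> S)" using finDs by blast
      show "(\<Union>B\<in>KK. Ds \<inter> B) \<subseteq> Ds \<inter> S" using KKS Kcomp by blast
    qed
    finally show ?thesis .
  qed
  have wfL: "wf_graph (induced G L)" by (rule wf_induced[OF wf]) (auto simp: L_def)
  have LC: "induced G L \<in> C" using cC GC wf ucL unfolding closed_under_components_def by blast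
  have cL1: "real (card (Out \<inter> L)) \<le> \<alpha> * real (MDS (induced G L)) + \<beta>"
    using hyp LC wfL run_induced[OF wf ucL, of A r] OL unfolding D0_def by metis
  have mdsL: "MDS (induced G L) \<le> card (Ds \<inter> L)"
    by (rule MDS_le[OF dom_restrict[OF wf ucL Ds(1)]])
  have cL: "real (card (Out \<inter> L)) \<le> (\<alpha> + \<epsilon>) * real (card (Ds \<inter> L))"
  proof (cases "L = {}")
    case True then show ?thesis by simp
  next
    case False
    then obtain v where vL: "v \<in> L" by blast
    have vV: "v \<in> fst G" and nsm: "\<not> smallv G m v" using vL unfolding L_def S_def by auto
    have big: "m + 1 \<le> card (Ds \<inter> L)"
    proof (cases "ball G (Suc (3*m)) v = ball G (3*m) v")
      case False
      have dom: "\<forall>u\<in>ball G (3*m) v. u \<in> Ds \<or> (\<exists>x\<in>Ds. (x,u) \<in> snd G)"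
        using Ds(1) ball_sub[OF sub] unfolding dominating_def by blast
      have "m + 1 \<le> card (Ds \<inter> ball G (Suc (3*m)) v)" by (rule sphere[OF wf vV False dom finDs])
      also have "\<dots> \<le> card (Ds \<inter> L)"
        using ball_closed_sub[OF vL clL] finDs by (intro card_mono) auto
      finally show ?thesis .
    next
      case True
      then have gt: "m < MDS (induced G (K v))" using nsm unfolding smallv_def K_def by simp
      have uc: "union_of_components G (K v)"
        using True KV[of v] unfolding K_def union_of_components_def by (auto simp: ball_Suc)
      have "MDS (induced G (K v)) \<le> card (Ds \<inter> K v)" by (rule MDS_le[OF dom_restrict[OF wf uc Ds(1)]])
      also have "\<dots> \<le> card (Ds \<inter> L)"
        using ball_closed_sub[OF vL clL] finDs unfolding K_def by (intro card_mono) auto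
      finally show ?thesis using gt by simp
    qed
    have "\<beta> \<le> \<epsilon> * real m" using m ep by (simp add: divide_le_eq mult.commute)
    also have "\<dots> \<le> \<epsilon> * real (card (Ds \<inter> L))" using big ep by simp
    finally have b: "\<beta> \<le> \<epsilon> * real (card (Ds \<inter> L))" .
    have "\<alpha> * real (MDS (induced G L)) \<le> \<alpha> * real (card (Ds \<inter> L))" using mdsL al by simp
    then show ?thesis using cL1 b by (simp add: distrib_right)
  qed
  have "real (card Out) \<le> real (card (Ds \<inter> S)) + (\<alpha> + \<epsilon>) * real (card (Ds \<inter> L))"
    using cardO cS cL by simp
  also have "\<dots> \<le> (\<alpha> + \<epsilon>) * real (card (Ds \<inter> S)) + (\<alpha> + \<epsilon>) * real (card (Ds \<inter> L))"
  proof -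
    have "1 * real (card (Ds \<inter> S)) \<le> (\<alpha> + \<epsilon>) * real (card (Ds \<inter> S))"
      using al ep by (intro mult_right_mono) auto
    then show ?thesis by simp
  qed
  also have "\<dots> = (\<alpha> + \<epsilon>) * real (MDS G)" using cardDs Ds(2) by (simp add: distrib_left)
  finally show ?thesis using domO unfolding Out_def by simp
qed



lemma MDS0: assumes "wf_graph G" "MDS G = 0" shows "fst G = {}"
proof -
  obtain D where D: "dominating G D" "card D = 0" using MDS_ex[of G] assms(2) by auto
  have "finite D" by (rule dominating_fin[OF assms(1) D(1)])
  then have "D = {}" using D(2) by simp
  then show ?thesis using D(1) by (auto simp: dominating_def)
qed

theorem mainTheorem15:
  "\<exists>c::real. c > 0 \<and>
    (\<forall>(\<alpha>::real) (\<beta>::real) (\<epsilon>::real) (\<C>::graph set) (A::local_alg) (r::nat).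
      \<alpha> \<ge> 1 \<longrightarrow> \<beta> \<ge> 0 \<longrightarrow> \<epsilon> > 0 \<longrightarrow> closed_under_components \<C> \<longrightarrow>
      (\<forall>G\<in>\<C>. wf_graph G \<longrightarrow> dominating G (run_local A r G) \<and>
          real (card (run_local A r G)) \<le> \<alpha> * real (MDS G) + \<beta>) \<longrightarrow>
      (\<exists>(A'::local_alg) (r'::nat). real r' \<le> real r + c * \<beta> / \<epsilon> \<and>
         (\<forall>G\<in>\<C>. wf_graph G \<longrightarrow> dominating G (run_local A' r' G) \<and>
            real (card (run_local A' r' G)) \<le> (\<alpha> + \<epsilon>) * real (MDS G))))"
proof (rule exI[of _ 7], intro conjI allI impI)
  fix \<alpha> \<beta> \<epsilon> :: real and C :: "graph set" and A :: local_alg and r :: nat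
  assume al: "\<alpha> \<ge> 1" and be: "\<beta> \<ge> 0" and ep: "\<epsilon> > 0" and cC: "closed_under_components C"
    and hyp: "\<forall>G\<in>C. wf_graph G \<longrightarrow> dominating G (run_local A r G) \<and>
          real (card (run_local A r G)) \<le> \<alpha> * real (MDS G) + \<beta>"
  show "\<exists>(A'::local_alg) (r'::nat). real r' \<le> real r + 7 * \<beta> / \<epsilon> \<and>
         (\<forall>G\<in>C. wf_graph G \<longrightarrow> dominating G (run_local A' r' G) \<and>
            real (card (run_local A' r' G)) \<le> (\<alpha> + \<epsilon>) * real (MDS G))"
  proof (cases "\<beta> \<le> \<epsilon>")
    case True
    have "real r \<le> real r + 7 * \<beta> / \<epsilon>" using be ep by simp
    moreover have "\<forall>G\<in>C. wf_graph G \<longrightarrow> dominating G (run_local A r G) \<and>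
            real (card (run_local A r G)) \<le> (\<alpha> + \<epsilon>) * real (MDS G)"
    proof (intro ballI impI conjI)
      fix G assume G: "G \<in> C" "wf_graph G"
      show "dominating G (run_local A r G)" using hyp G by blast
      show "real (card (run_local A r G)) \<le> (\<alpha> + \<epsilon>) * real (MDS G)"
      proof (cases "MDS G = 0")
        case True
        then have "fst G = {}" using MDS0 G(2) by blast
        then have "run_local A r G = {}" by (simp add: run_local_def)
        then show ?thesis using al ep by simp
      next
        case False
        then have "1 \<le> real (MDS G)" by simp
        then have "\<epsilon> \<le> \<epsilon> * real (MDS G)" using ep by simp
        then show ?thesis using hyp G \<open>\<beta> \<le> \<epsilon>\<close> by (simp add: distrib_right) (smt (verit))
      qed
    qed
    ultimately show ?thesis by blast
  next
    case False
    define m where "m = nat \<lceil>\<beta> / \<epsilon>\<rceil>"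
    have m1: "\<beta> / \<epsilon> \<le> real m" unfolding m_def by (rule real_nat_ceiling_ge)
    have "real m = of_int \<lceil>\<beta> / \<epsilon>\<rceil>" unfolding m_def using be ep by simp
    then have m2: "real m \<le> \<beta> / \<epsilon> + 1" using of_int_ceiling_le_add_one[of "\<beta> / \<epsilon>"] by simp
    have q: "1 < \<beta> / \<epsilon>" using False ep by simp
    have "real (r + 3*m + 1) \<le> real r + 7 * \<beta> / \<epsilon>" using m2 q by simp
    moreover have "\<forall>G\<in>C. wf_graph G \<longrightarrow> dominating G (run_local (alg A r m) (r + 3*m + 1) G) \<and>
            real (card (run_local (alg A r m) (r + 3*m + 1) G)) \<le> (\<alpha> + \<epsilon>) * real (MDS G)"
      using main_constr[OF _ _ cC hyp al ep be m1] by blast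
    ultimately show ?thesis by blast
  qed
qed simp


end
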